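(* Let $n_1,n_2$ be distinct primes and let $k>1$ be an integer with $\gcd(k,n_1)=\gcd(k,n_2)=1$, and suppose $n=n_1n_2$ is a pseudoprime of basis $k$. Then for all $r,s,q,p\in\mathbb{N}$, $$\frac{k^{\,r n_1^{q}+s n_2^{p}-(r+s)}-1}{n}\in\mathbb{N}.$$
   Context: A positive integer $n$ is called a pseudoprime of basis $k$ (where $k>1$ is an integer) if $n$ is an odd composite number, $\gcd(n,k)=1$, and $k^{n-1}\equiv 1 \pmod n$. $\mathbb{N}$ denotes the positive integers. *)

theory Defs
  imports "HOL-Computational_Algebra.Primes" "HOL-Number_Theory.Cong"
begin

definition pseudoprime :: "nat \<Rightarrow> nat \<Rightarrow> bool" where
  "pseudoprime k n \<longleftrightarrow> odd n \<and> n > 1 \<and> \<not> prime n \<and> coprime n k \<and> [k ^ (n - 1) = 1] (mod n)"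

end

theory Submission
  imports Defs "HOL-Number_Theory.Number_Theory"
begin

lemma pow_dvd_aux: "(a - 1) dvd (a ^ q - 1)" if "a \<ge> 1" for a q :: nat
proof -
  have "[a = 1] (mod (a - 1))"
  proof -
    have "[(a - 1) + 1 = 0 + 1] (mod (a - 1))"
      by (rule cong_add) (auto simp: cong_def)
    thus ?thesis using that by simp
  qed
  hence "[a ^ q = 1 ^ q] (mod (a - 1))" by (rule cong_pow)
  thus ?thesis using cong_to_1_nat by simp
qed

lemma one_side:
  fixes a b k x y :: nat
  assumes pa: "prime a" and ca: "coprime k a" and b1: "b \<ge> 1"
    and h: "[k ^ (a * b - 1) = 1] (mod a)"
  shows "[k ^ (x * (a - 1) + y * (b - 1)) = 1] (mod a)"
proof -
  have nd: "\<not> a dvd k"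
  proof
    assume "a dvd k"
    hence "a dvd gcd k a" by simp
    with ca have "a dvd 1" by simp
    with pa show False by simp
  qed
  have F: "[k ^ (a - 1) = 1] (mod a)" using fermat_theorem[OF pa nd] .
  have Fb: "[k ^ (b * (a - 1)) = 1] (mod a)"
  proof -
    have "k ^ (b * (a - 1)) = (k ^ (a - 1)) ^ b" by (simp add: power_mult[symmetric] mult.commute)
    thus ?thesis using cong_pow[OF F, of b] by simp
  qed
  have a1: "a \<ge> 1" using pa prime_ge_1_nat by blast
  have e: "a * b - 1 = b * (a - 1) + (b - 1)"
  proof -
    obtain a' where "a = Suc a'" using a1 by (cases a) auto
    moreover obtain b' where "b = Suc b'" using b1 by (cases b) auto
    ultimately show ?thesis by (simp add: algebra_simps)
  qed
  have "[k ^ (b * (a - 1)) * k ^ (b - 1) = 1] (mod a)"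
    using h e by (simp add: power_add)
  moreover have "[k ^ (b * (a - 1)) * k ^ (b - 1) = 1 * k ^ (b - 1)] (mod a)"
    using cong_scalar_right[OF Fb] .
  ultimately have G: "[k ^ (b - 1) = 1] (mod a)"
    by (metis cong_sym cong_trans mult_1)
  have X: "[k ^ (x * (a - 1)) = 1] (mod a)"
  proof -
    have "k ^ (x * (a - 1)) = (k ^ (a - 1)) ^ x" by (simp add: power_mult[symmetric] mult.commute)
    thus ?thesis using cong_pow[OF F, of x] by simp
  qed
  have Y: "[k ^ (y * (b - 1)) = 1] (mod a)"
  proof -
    have "k ^ (y * (b - 1)) = (k ^ (b - 1)) ^ y" by (simp add: power_mult[symmetric] mult.commute)
    thus ?thesis using cong_pow[OF G, of y] by simp
  qed
  have "[k ^ (x * (a - 1)) * k ^ (y * (b - 1)) = 1 * 1] (mod a)" using cong_mult[OF X Y] .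
  thus ?thesis by (simp add: power_add)
qed

theorem mainTheorem3:
  fixes n1 n2 k r s q p :: nat
  assumes "prime n1" and "prime n2" and "n1 \<noteq> n2"
    and "k > 1" and "coprime k n1" and "coprime k n2"
    and "pseudoprime k (n1 * n2)"
    and "r \<ge> 1" and "s \<ge> 1" and "q \<ge> 1" and "p \<ge> 1"
  shows "\<exists>m::int. m \<ge> 1 \<and>
           int k ^ (r * n1 ^ q + s * n2 ^ p - (r + s)) - 1 = int (n1 * n2) * m"
proof -
  have n1: "n1 \<ge> 2" and n2: "n2 \<ge> 2" using assms prime_ge_2_nat by auto
  have P: "[k ^ (n1 * n2 - 1) = 1] (mod n1 * n2)" using assms(7) by (simp add: pseudoprime_def)
  have P1: "[k ^ (n1 * n2 - 1) = 1] (mod n1)" using cong_dvd_modulus_nat[OF P] by simp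
  have P2: "[k ^ (n2 * n1 - 1) = 1] (mod n2)" using cong_dvd_modulus_nat[OF P] by (simp add: mult.commute)
  obtain c1 where c1: "n1 ^ q - 1 = (n1 - 1) * c1" using pow_dvd_aux[of n1 q] n1 by (auto elim: dvdE)
  obtain c2 where c2: "n2 ^ p - 1 = (n2 - 1) * c2" using pow_dvd_aux[of n2 p] n2 by (auto elim: dvdE)
  have q1: "n1 ^ q \<ge> 1" and p1: "n2 ^ p \<ge> 1" using n1 n2 by auto
  have nq: "n1 ^ q \<ge> 2" using n1 assms(10)
    using power_increasing[of 1 q n1] by simp
  define e where "e = r * n1 ^ q + s * n2 ^ p - (r + s)"
  have e1: "e = r * (n1 ^ q - 1) + s * (n2 ^ p - 1)"
    unfolding e_def using q1 p1 by (simp add: diff_mult_distrib2 algebra_simps)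
  have "r * (n1 ^ q - 1) \<ge> r * 1" using nq by (intro mult_le_mono2) simp
  hence epos: "e \<ge> 1" unfolding e1 using assms(8) by linarith
  have e2: "e = (r * c1) * (n1 - 1) + (s * c2) * (n2 - 1)" unfolding e1 c1 c2 by (simp add: algebra_simps)
  have e3: "e = (s * c2) * (n2 - 1) + (r * c1) * (n1 - 1)" using e2 by simp
  have A: "[k ^ e = 1] (mod n1)"
    using one_side[OF assms(1) assms(5) _ P1, of "r * c1" "s * c2"] n2 e2 by simp
  have B: "[k ^ e = 1] (mod n2)"
    using one_side[OF assms(2) assms(6) _ P2, of "s * c2" "r * c1"] n1 e3 by simp
  have cp: "coprime n1 n2" using assms(1-3) by (simp add: primes_coprime)
  have C: "[k ^ e = 1] (mod n1 * n2)" using coprime_cong_mult_nat[OF A B cp] .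
  then obtain m where m: "k ^ e - 1 = n1 * n2 * m" using cong_to_1_nat[OF C] by (auto elim: dvdE)
  have kg: "k ^ e > 1" using one_less_power[OF assms(4), of e] epos by simp
  have "m \<noteq> 0"
  proof
    assume "m = 0"
    hence "k ^ e - 1 = 0" using m by simp
    with kg show False by simp
  qed
  have "int k ^ e - 1 = int (k ^ e - 1)" using kg by (simp add: of_nat_diff)
  also have "\<dots> = int (n1 * n2) * int m" using m by simp
  finally show ?thesis unfolding e_def using \<open>m \<noteq> 0\<close> by (intro exI[of _ "int m"]) auto
qed

end
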